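(* Let $\mathcal{X}$ be a finite set of actions, $\mathcal{Y}$ a finite set of responses, $\mathcal{H}\subseteq\mathcal{Y}^{\mathcal{X}}$, $\mathrm{cost}:\mathcal{X}\times\mathcal{Y}\to\mathbb{R}_+$. Let $f:2^{\mathcal{X}\times\mathcal{Y}}\to\mathbb{R}_+$ and $Q>0$; suppose $f$ is submodular, $f(\emptyset)=0$, and $f$ is consistency-aware for $Q$. Then there exists $x\in\mathcal{X}$ such that $$u^f(x,\emptyset)\ge\frac{Q}{2\min(g_{\mathrm{cost}},R_{\mathrm{cost}})\,\mathrm{OPT}}.$$
   Context: The true state is an unknown $h^*\in\mathcal{H}$. An interactive algorithm, given the observed set $S$ of action-response pairs, either selects an action $x$ (observing $(x,h^*(x))$) or terminates; $S^h[\mathcal{A}]$ is the set collected until termination when $h^*=h$; $\mathrm{cost}(\mathcal{A})=\max_{h\in\mathcal{H}}\sum_{(x,y)\in S^h[\mathcal{A}]}\mathrm{cost}(x,y)$; $\mathrm{OPT}$ is the minimum of $\mathrm{cost}(\mathcal{A})$ over interactive algorithms with $f(S^h[\mathcal{A}])\ge Q$ for all $h\in\mathcal{H}$. Version space $V(S)=\{h\in\mathcal{H}\mid\forall(x,y)\in S,\ y=h(x)\}$. $f$ is consistency-aware for $Q$ if $f(S)\ge Q$ whenever $V(S)=\emptyset$. $\delta_g(z\mid A)=g(A\cup\{z\})-g(A)$; $u^f(x,S)=\min_{h\in V(S)}\frac{\delta_{\min(f,Q)}((x,h(x))\mid S)}{\mathrm{cost}(x,h(x))}$. $R_{\mathrm{cost}}=\max_x\frac{\max_y\mathrm{cost}(x,y)}{\min_y\mathrm{cost}(x,y)}$.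 With $\phi(x)$ the second-smallest value of the multiset $\{\mathrm{cost}(x,y)\mid y\in\mathcal{Y}\}$, $\phi_{\min}=\min_x\phi(x)$ and $c_{\max}=\max_{(x,y)}\mathrm{cost}(x,y)$, $g_{\mathrm{cost}}=c_{\max}/\phi_{\min}$. *)

theory Defs
  imports Main "HOL-Library.Extended_Real" "HOL-Library.Multiset"
begin

type_synonym ('x, 'y) alg = "('x \<times> 'y) set \<Rightarrow> 'x option"

definition version_space :: "('x \<Rightarrow> 'y) set \<Rightarrow> ('x \<times> 'y) set \<Rightarrow> ('x \<Rightarrow> 'y) set" where
  "version_space H S = {h \<in> H. \<forall>(x, y) \<in> S. y = h x}"

definition consistency_aware :: "('x \<Rightarrow> 'y) set \<Rightarrow> (('x \<times> 'y) set \<Rightarrow> real) \<Rightarrow> real \<Rightarrow> bool" where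
  "consistency_aware H f Q \<longleftrightarrow> (\<forall>S. version_space H S = {} \<longrightarrow> f S \<ge> Q)"

definition submodular :: "('a set \<Rightarrow> real) \<Rightarrow> bool" where
  "submodular f \<longleftrightarrow> (\<forall>A B. f (A \<union> B) + f (A \<inter> B) \<le> f A + f B)"

definition delta :: "('a set \<Rightarrow> real) \<Rightarrow> 'a \<Rightarrow> 'a set \<Rightarrow> real" where
  "delta g z A = g (insert z A) - g A"

definition u_score :: "('x \<Rightarrow> 'y) set \<Rightarrow> (('x \<times> 'y) set \<Rightarrow> real) \<Rightarrow> real
    \<Rightarrow> ('x \<Rightarrow> 'y \<Rightarrow> real) \<Rightarrow> 'x \<Rightarrow> ('x \<times> 'y) set \<Rightarrow> real" where
  "u_score H f Q cost x S =
     Min ((\<lambda>h. delta (\<lambda>T. min (f T) Q) (x, h x) S / cost x (h x)) ` version_space H S)"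

fun run :: "('x, 'y) alg \<Rightarrow> ('x \<Rightarrow> 'y) \<Rightarrow> nat \<Rightarrow> ('x \<times> 'y) set" where
  "run A h 0 = {}"
| "run A h (Suc n) = (case A (run A h n) of None \<Rightarrow> run A h n
                       | Some x \<Rightarrow> insert (x, h x) (run A h n))"

definition terminates :: "('x, 'y) alg \<Rightarrow> ('x \<Rightarrow> 'y) \<Rightarrow> bool" where
  "terminates A h \<longleftrightarrow> (\<exists>n. A (run A h n) = None)"

definition collected :: "('x, 'y) alg \<Rightarrow> ('x \<Rightarrow> 'y) \<Rightarrow> ('x \<times> 'y) set" where
  "collected A h = run A h (LEAST n. A (run A h n) = None)"

definition feasible :: "('x \<Rightarrow> 'y) set \<Rightarrow> (('x \<times> 'y) set \<Rightarrow> real) \<Rightarrow> real \<Rightarrow> ('x, 'y) alg \<Rightarrow> bool" where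
  "feasible H f Q A \<longleftrightarrow> (\<forall>h \<in> H. terminates A h \<and> f (collected A h) \<ge> Q)"

definition alg_cost :: "('x \<Rightarrow> 'y) set \<Rightarrow> ('x \<Rightarrow> 'y \<Rightarrow> real) \<Rightarrow> ('x, 'y) alg \<Rightarrow> real" where
  "alg_cost H cost A = Max ((\<lambda>h. \<Sum>(x, y) \<in> collected A h. cost x y) ` H)"

text \<open>OPT, as an extended real (infinite if no feasible algorithm exists).\<close>
definition OPT :: "('x \<Rightarrow> 'y) set \<Rightarrow> (('x \<times> 'y) set \<Rightarrow> real) \<Rightarrow> real
    \<Rightarrow> ('x \<Rightarrow> 'y \<Rightarrow> real) \<Rightarrow> ereal" where
  "OPT H f Q cost = (INF A \<in> {A. feasible H f Q A}. ereal (alg_cost H cost A))"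

definition R_cost :: "('x::finite \<Rightarrow> 'y::finite \<Rightarrow> real) \<Rightarrow> real" where
  "R_cost cost = Max (range (\<lambda>x. Max (range (cost x)) / Min (range (cost x))))"

text \<open>Second-smallest value of the multiset of costs of action x.\<close>
definition phi :: "('x \<Rightarrow> 'y::finite \<Rightarrow> real) \<Rightarrow> 'x \<Rightarrow> real" where
  "phi cost x = sorted_list_of_multiset (image_mset (cost x) (mset_set UNIV)) ! 1"

definition g_cost :: "('x::finite \<Rightarrow> 'y::finite \<Rightarrow> real) \<Rightarrow> real" where
  "g_cost cost = Max (range (\<lambda>(x, y). cost x y)) / Min (range (phi cost))"

end

theory Submission
  imports Defs
begin

lemma run_mono1: "run A h n \<subseteq> run A h (Suc n)"
  by (auto split: option.split)

lemma run_mono: "n \<le> m \<Longrightarrow> run A h n \<subseteq> run A h m"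
  by (induction m rule: dec_induct) (use run_mono1 in blast)+

lemma run_stable: "A (run A h n) = None \<Longrightarrow> run A h (n + k) = run A h n"
  by (induction k) auto

lemma run_pairs: "(x, y) \<in> run A h n \<Longrightarrow> y = h x"
  by (induction n) (auto split: option.splits)

lemma run_Some: "A (run A h n) = Some x \<Longrightarrow> run A h (Suc n) = insert (x, h x) (run A h n)"
  by simp

lemma run_agree: "(\<forall>(x, y)\<in>run A g n. h x = y) \<Longrightarrow> run A h n = run A g n"
proof (induction n)
  case 0 then show ?case by simp
next
  case (Suc n)
  have "\<forall>(x, y)\<in>run A g n. h x = y" using Suc.prems run_mono1[of A g n] by fastforce
  then have e: "run A h n = run A g n" using Suc.IH by blast
  show ?case
  proof (cases "A (run A g n)")
    case None then show ?thesis using e by simp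
  next
    case (Some x)
    then have "(x, g x) \<in> run A g (Suc n)" by simp
    then have "h x = g x" using Suc.prems by auto
    then show ?thesis using e Some by simp
  qed
qed

lemma collected_eq: assumes "A (run A h n) = None" shows "collected A h = run A h n"
proof -
  let ?N = "LEAST n. A (run A h n) = None"
  have le: "?N \<le> n" using assms by (rule Least_le)
  have "A (run A h ?N) = None" using assms by (rule LeastI)
  then have "run A h (?N + (n - ?N)) = run A h ?N" by (rule run_stable)
  then show ?thesis using le unfolding collected_def by simp
qed

lemma run_sub_collected: assumes "terminates A h" shows "run A h n \<subseteq> collected A h"
proof -
  let ?N = "LEAST n. A (run A h n) = None"
  have N: "A (run A h ?N) = None" using assms unfolding terminates_def by (rule LeastI_ex)
  show ?thesis
  proof (cases "n \<le> ?N")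
    case True then show ?thesis unfolding collected_def by (rule run_mono)
  next
    case False
    have "run A h (?N + (n - ?N)) = run A h ?N" by (rule run_stable[where A=A and h=h, OF N])
    then show ?thesis using False unfolding collected_def by simp
  qed
qed

lemma subadd:
  fixes f :: "'a set \<Rightarrow> real"
  assumes "submodular f" "f {} = 0" "\<And>S. f S \<ge> 0" "Q > 0" "finite S"
  shows "min (f S) Q \<le> (\<Sum>z\<in>S. min (f {z}) Q)"
  using assms(5)
proof (induction S rule: finite_induct)
  case empty then show ?case using assms by simp
next
  case (insert z S)
  have "f ({z} \<union> S) + f ({z} \<inter> S) \<le> f {z} + f S" using assms(1) unfolding submodular_def by blast
  then have "f (insert z S) \<le> f {z} + f S" using insert assms(2) by simp
  then have "min (f (insert z S)) Q \<le> min (f {z}) Q + min (f S) Q"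
    using assms(3)[of "{z}"] assms(3)[of S] assms(4) by linarith
  then show ?case using insert by simp
qed


lemma sorted_1_le:
  fixes L :: "real list"
  assumes "sorted L" "length L \<ge> 2" "size (filter_mset (\<lambda>v. v \<le> b) (mset L)) \<ge> 2"
  shows "L ! 1 \<le> b"
proof (rule ccontr)
  assume "\<not> L ! 1 \<le> b"
  obtain a0 a1 r where L: "L = a0 # a1 # r" using assms(2)
    by (metis One_nat_def Suc_1 Suc_le_length_iff)
  have "a1 > b" using \<open>\<not> L ! 1 \<le> b\<close> L by simp
  have "\<forall>v\<in>set r. a1 \<le> v" using assms(1) L by simp
  then have "filter (\<lambda>v. v \<le> b) (a1 # r) = []" using \<open>a1 > b\<close> by (auto simp: filter_empty_conv)
  then have "length (filter (\<lambda>v. v \<le> b) L) \<le> 1" using L by simp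
  moreover have "size (filter_mset (\<lambda>v. v \<le> b) (mset L)) = length (filter (\<lambda>v. v \<le> b) L)"
    by (metis mset_filter size_mset)
  ultimately show False using assms(3) by simp
qed

lemma phi_le:
  fixes cost :: "'x \<Rightarrow> 'y::finite \<Rightarrow> real"
  assumes "card (UNIV :: 'y set) \<ge> 2" "y \<noteq> y'"
  shows "phi cost x \<le> max (cost x y) (cost x y')"
proof -
  define M where "M = image_mset (cost x) (mset_set (UNIV :: 'y set))"
  define L where "L = sorted_list_of_multiset M"
  let ?b = "max (cost x y) (cost x y')"
  have len: "length L = card (UNIV :: 'y set)" unfolding L_def M_def
    by (metis mset_sorted_list_of_multiset size_image_mset size_mset size_mset_set)
  have "filter_mset (\<lambda>v. v \<le> ?b) M = image_mset (cost x) (mset_set {z. cost x z \<le> ?b})"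
    unfolding M_def by (simp add: filter_mset_image_mset)
  then have "size (filter_mset (\<lambda>v. v \<le> ?b) M) = card {z. cost x z \<le> ?b}" by simp
  moreover have "{y, y'} \<subseteq> {z. cost x z \<le> ?b}" by auto
  then have "card {z. cost x z \<le> ?b} \<ge> 2" using assms(2)
    by (metis card_2_iff card_mono finite)
  ultimately have "size (filter_mset (\<lambda>v. v \<le> ?b) (mset L)) \<ge> 2" unfolding L_def by simp
  then have "L ! 1 \<le> ?b" using len assms(1) by (intro sorted_1_le) (auto simp: L_def)
  then show ?thesis unfolding phi_def L_def M_def .
qed

lemma phi_mem:
  fixes cost :: "'x \<Rightarrow> 'y::finite \<Rightarrow> real"
  assumes "card (UNIV :: 'y set) \<ge> 2"
  shows "\<exists>y. phi cost x = cost x y"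
proof -
  define M where "M = image_mset (cost x) (mset_set (UNIV :: 'y set))"
  define L where "L = sorted_list_of_multiset M"
  have len: "length L = card (UNIV :: 'y set)" unfolding L_def M_def
    by (metis mset_sorted_list_of_multiset size_image_mset size_mset size_mset_set)
  have "L ! 1 \<in> set L" using len assms by simp
  then have "L ! 1 \<in> cost x ` UNIV" unfolding L_def M_def by simp
  then show ?thesis unfolding phi_def L_def M_def by auto
qed


lemma cost_facts:
  fixes cost :: "'x::finite \<Rightarrow> 'y::finite \<Rightarrow> real"
  assumes Y2: "card (UNIV :: 'y set) \<ge> 2" and cpos: "\<And>x y. cost x y > 0"
  shows "cost x y1 \<le> R_cost cost * cost x y2"
    and "R_cost cost \<ge> 1"
    and "Min (range (phi cost)) > 0"
    and "Min (range (phi cost)) \<le> phi cost x"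
    and "cost x y \<le> g_cost cost * Min (range (phi cost))"
    and "g_cost cost \<ge> 1"
proof -
  have mx: "cost x y1 \<le> Max (range (cost x))" by simp
  have mn: "Min (range (cost x)) \<le> cost x y2" by simp
  have mnp: "Min (range (cost x)) > 0" using cpos by simp
  have "Max (range (cost x)) / Min (range (cost x)) \<le> R_cost cost"
    unfolding R_cost_def by (rule Max_ge) auto
  then have "Max (range (cost x)) \<le> R_cost cost * Min (range (cost x))"
    using mnp by (simp add: divide_le_eq)
  moreover have "Max (range (cost x)) \<ge> Min (range (cost x))" by (simp add: Max_ge_iff Min_le_iff)
  ultimately have R1: "R_cost cost \<ge> 1" using mnp by (metis mult_le_cancel_right1 order_trans)
  show "R_cost cost \<ge> 1" by (rule R1)
  have "R_cost cost * Min (range (cost x)) \<le> R_cost cost * cost x y2" using mn R1 by simp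
  then show "cost x y1 \<le> R_cost cost * cost x y2"
    using mx \<open>Max (range (cost x)) \<le> R_cost cost * Min (range (cost x))\<close> by linarith
  have "Min (range (phi cost)) \<in> range (phi cost)" by (rule Min_in) auto
  then obtain x0 where x0: "Min (range (phi cost)) = phi cost x0" by blast
  obtain y0 where y0: "phi cost x0 = cost x0 y0" using phi_mem[OF Y2, of cost x0] by blast
  show pmpos: "Min (range (phi cost)) > 0" using x0 y0 cpos by simp
  show "Min (range (phi cost)) \<le> phi cost x" by simp
  define cm where "cm = Max (range (\<lambda>(x, y). cost x y))"
  have cle: "cost a b \<le> cm" for a b unfolding cm_def by (rule Max_ge) auto
  have g: "g_cost cost = cm / Min (range (phi cost))" unfolding g_cost_def cm_def by simp
  show "cost x y \<le> g_cost cost * Min (range (phi cost))" using g pmpos cle[of x y] by (simp del: Min_gr_iff)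
  show "g_cost cost \<ge> 1" using g pmpos cle[of x0 y0] x0 y0 by (simp del: Min_gr_iff)
qed

lemma u_empty:
  assumes "f {} = 0" "Q > 0"
  shows "u_score H f Q cost x {} = Min ((\<lambda>h. min (f {(x, h x)}) Q / cost x (h x)) ` H)"
  using assms unfolding u_score_def delta_def version_space_def by simp

lemma step_exists: "P (0::nat) \<Longrightarrow> \<not> P M \<Longrightarrow> \<exists>n. P n \<and> \<not> P (Suc n)"
  by (induction M) auto


lemma core:
  fixes H :: "('x::finite \<Rightarrow> 'y::finite) set"
    and cost :: "'x \<Rightarrow> 'y \<Rightarrow> real"
    and f :: "('x \<times> 'y) set \<Rightarrow> real"
  assumes Y2: "card (UNIV :: 'y set) \<ge> 2"
    and cpos: "\<And>x y. cost x y > 0"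
    and fnn: "\<And>S. f S \<ge> 0"
    and Qpos: "Q > 0"
    and sub: "submodular f"
    and f0: "f {} = 0"
    and ca: "consistency_aware H f Q"
    and feas: "feasible H f Q A"
    and Hne: "H \<noteq> {}"
    and ocpos: "alg_cost H cost A > 0"
  shows "\<exists>x. u_score H f Q cost x {} \<ge> Q / (2 * min (g_cost cost) (R_cost cost) * alg_cost H cost A)"
proof (rule ccontr)
  define oc where "oc = alg_cost H cost A"
  define m where "m = min (g_cost cost) (R_cost cost)"
  define t where "t = Q / (2 * m * oc)"
  note cf = cost_facts[where cost=cost, OF Y2 cpos]
  have m1: "m \<ge> 1" unfolding m_def using cf by simp
  have ocp: "oc > 0" using ocpos oc_def by simp
  have tm: "t * (m * oc) = Q / 2" unfolding t_def using m1 ocp by (simp add: field_simps)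
  assume "\<not> ?thesis"
  then have neg: "u_score H f Q cost x {} < t" for x unfolding t_def m_def oc_def using not_le by blast
  have "\<exists>h\<in>H. min (f {(x, h x)}) Q < t * cost x (h x)" for x
  proof -
    have "u_score H f Q cost x {} \<in> (\<lambda>h. min (f {(x, h x)}) Q / cost x (h x)) ` H"
      unfolding u_empty[where f=f and Q=Q, OF f0 Qpos] by (rule Min_in) (use Hne in auto)
    then obtain h where "h \<in> H" "u_score H f Q cost x {} = min (f {(x, h x)}) Q / cost x (h x)" by blast
    then show ?thesis using neg[of x] cpos[of x "h x"] by (auto simp: divide_less_eq)
  qed
  then have "\<forall>x. \<exists>h. h \<in> H \<and> min (f {(x, h x)}) Q < t * cost x (h x)" by blast
  then obtain bad where "\<forall>x. bad x \<in> H \<and> min (f {(x, bad x x)}) Q < t * cost x (bad x x)"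
    by (rule choice[THEN exE])
  then have bad: "\<And>x. bad x \<in> H" "\<And>x. min (f {(x, bad x x)}) Q < t * cost x (bad x x)"
    by simp_all
  define g where "g = (\<lambda>x. bad x x)"
  have gbad: "min (f {(x, g x)}) Q < t * cost x (g x)" for x using bad(2) g_def by simp
  have trm: "terminates A h" and fcol: "f (collected A h) \<ge> Q" if "h \<in> H" for h
    using feas that unfolding feasible_def by auto
  have colb: "(\<Sum>(x, y)\<in>collected A h. cost x y) \<le> oc" if "h \<in> H" for h
    unfolding oc_def alg_cost_def by (rule Max_ge) (use that in auto)
  have runb: "(\<Sum>(x, y)\<in>run A h n. cost x y) \<le> oc" if "h \<in> H" for h n
  proof -
    have "(\<Sum>(x, y)\<in>run A h n. cost x y) \<le> (\<Sum>(x, y)\<in>collected A h. cost x y)"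
      by (rule sum_mono2) (use run_sub_collected[OF trm[OF that]] cpos in \<open>auto intro: less_imp_le\<close>)
    then show ?thesis using colb[OF that] by linarith
  qed
  have pairb: "cost x y \<le> oc" if "h \<in> H" "(x, y) \<in> run A h n" for h n x y
  proof -
    have "cost x y \<le> (\<Sum>(x, y)\<in>run A h n. cost x y)"
      using member_le_sum[of "(x,y)" "run A h n" "\<lambda>(x, y). cost x y"] that cpos
      by (auto intro: less_imp_le)
    then show ?thesis using runb[OF that(1), of n] by linarith
  qed
  have key: "Q < t * (\<Sum>(x, y)\<in>S. cost x y)" if "f S \<ge> Q" "\<forall>(x, y)\<in>S. y = g x" for S
  proof -
    have "S \<noteq> {}" using that(1) f0 Qpos by auto
    have "Q = min (f S) Q" using that(1) by simp
    also have "\<dots> \<le> (\<Sum>z\<in>S. min (f {z}) Q)" by (rule subadd[OF sub f0 fnn Qpos]) simp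
    also have "\<dots> < (\<Sum>z\<in>S. t * (case z of (x, y) \<Rightarrow> cost x y))"
      by (rule sum_strict_mono) (use \<open>S \<noteq> {}\<close> that(2) gbad in auto)
    also have "\<dots> = t * (\<Sum>(x, y)\<in>S. cost x y)" by (simp add: sum_distrib_left)
    finally show ?thesis .
  qed
  define N where "N h = (LEAST n. A (run A h n) = None)" for h
  define M where "M = Max (N ` H)"
  have Mnone: "A (run A h M) = None" if "h \<in> H" for h
  proof -
    have N: "A (run A h (N h)) = None" using trm[OF that] unfolding terminates_def N_def by (rule LeastI_ex)
    have "N h \<le> M" unfolding M_def by (rule Max_ge) (use that in auto)
    have "run A h (N h + (M - N h)) = run A h (N h)" by (rule run_stable[where A=A and h=h and n="N h", OF N])
    then show ?thesis using N \<open>N h \<le> M\<close> by simp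
  qed
  show False
  proof (cases "version_space H (run A g M) = {}")
    case False
    then obtain h where h: "h \<in> H" "\<forall>(x, y)\<in>run A g M. y = h x"
      unfolding version_space_def by auto
    then have e: "run A h M = run A g M" by (intro run_agree) auto
    have "collected A h = run A g M" using collected_eq[where A=A and h=h and n=M, OF Mnone[OF h(1)]] e by simp
    then have "f (run A g M) \<ge> Q" using fcol[OF h(1)] by simp
    moreover have "\<forall>(x, y)\<in>run A g M. y = g x" by (auto dest: run_pairs)
    ultimately have "Q < t * (\<Sum>(x, y)\<in>run A g M. cost x y)" by (rule key)
    also have "\<dots> \<le> t * oc"
    proof -
      have "(\<Sum>(x, y)\<in>run A g M. cost x y) \<le> oc" using runb[OF h(1), of M] e by simp
      moreover have "t > 0" unfolding t_def using Qpos m1 ocp by simp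
      ultimately show ?thesis by simp
    qed
    also have "\<dots> \<le> Q / 2" using tm m1 ocp Qpos unfolding t_def by (simp add: field_simps)
    finally show False using Qpos by simp
  next
    case True
    have "version_space H (run A g 0) \<noteq> {}" using Hne unfolding version_space_def by simp
    then obtain n where n: "version_space H (run A g n) \<noteq> {}" "version_space H (run A g (Suc n)) = {}"
      using step_exists[of "\<lambda>n. version_space H (run A g n) \<noteq> {}" M] True by blast
    define S where "S = run A g n"
    obtain h where h: "h \<in> H" "\<forall>(x, y)\<in>S. y = h x" using n(1) unfolding version_space_def S_def by auto
    have e: "run A h n = S" unfolding S_def by (rule run_agree) (use h S_def in auto)
    obtain x where x: "A S = Some x"
      using n unfolding S_def by (cases "A (run A g n)") auto
    have Sg: "run A g (Suc n) = insert (x, g x) S" using x S_def by simp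
    have Sh: "run A h (Suc n) = insert (x, h x) S" using x e by simp
    have hx: "h x \<noteq> g x"
    proof
      assume "h x = g x"
      then have "h \<in> version_space H (run A g (Suc n))" using Sg h unfolding version_space_def by auto
      then show False using n(2) by simp
    qed
    have notin: "(x, h x) \<notin> S" using hx run_pairs[of x "h x" A g n] S_def by auto
    have finS: "finite S" by simp
    have sh: "cost x (h x) + (\<Sum>(x, y)\<in>S. cost x y) \<le> oc"
      using runb[OF h(1), of "Suc n"] Sh notin finS by simp
    have Sge: "(\<Sum>(x, y)\<in>S. cost x y) \<ge> 0" by (rule sum_nonneg) (auto intro: less_imp_le[OF cpos])
    have fS: "f (run A g (Suc n)) \<ge> Q" using ca n(2) unfolding consistency_aware_def by blast
    have pg: "\<forall>(x, y)\<in>insert (x, g x) S. y = g x" unfolding S_def by (auto dest: run_pairs)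
    have "Q < t * (\<Sum>(x, y)\<in>insert (x, g x) S. cost x y)"
      using fS[unfolded Sg] pg by (rule key)
    also have "\<dots> \<le> t * (cost x (g x) + (\<Sum>(x, y)\<in>S. cost x y))"
    proof -
      have "(\<Sum>(x, y)\<in>insert (x, g x) S. cost x y) \<le> cost x (g x) + (\<Sum>(x, y)\<in>S. cost x y)"
        using finS by (cases "(x, g x) \<in> S") (auto simp: insert_absorb intro: less_imp_le[OF cpos])
      moreover have "t > 0" unfolding t_def using Qpos m1 ocp by simp
      ultimately show ?thesis by simp
    qed
    finally have main: "Q < t * (cost x (g x) + (\<Sum>(x, y)\<in>S. cost x y))" .
    have tpos: "t > 0" unfolding t_def using Qpos m1 ocp by simp
    show False
    proof (cases "R_cost cost \<le> g_cost cost")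
      case True
      then have mR: "m = R_cost cost" unfolding m_def by simp
      have "cost x (g x) \<le> m * cost x (h x)" using cf(1) mR by simp
      moreover have "(\<Sum>(x, y)\<in>S. cost x y) \<le> m * (\<Sum>(x, y)\<in>S. cost x y)"
        using mult_right_mono[OF m1 Sge] by simp
      moreover have "m * (cost x (h x) + (\<Sum>(x, y)\<in>S. cost x y)) \<le> m * oc"
        using sh m1 by (intro mult_left_mono) auto
      ultimately have "cost x (g x) + (\<Sum>(x, y)\<in>S. cost x y) \<le> m * oc"
        by (simp add: distrib_left)
      then have "t * (cost x (g x) + (\<Sum>(x, y)\<in>S. cost x y)) \<le> t * (m * oc)" using tpos by simp
      then show False using main tm Qpos by simp
    next
      case False
      then have mg: "m = g_cost cost" unfolding m_def by simp
      define pm where "pm = Min (range (phi cost))"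
      show False
      proof (cases "pm \<le> oc")
        case True
        have "cost x (g x) \<le> m * pm" using cf(5) mg pm_def by simp
        also have "\<dots> \<le> m * oc" using True m1 by simp
        finally have c1: "cost x (g x) \<le> m * oc" .
        have "oc \<le> m * oc" using mult_right_mono[OF m1, of oc] ocp by simp
        then have "cost x (g x) + (\<Sum>(x, y)\<in>S. cost x y) \<le> 2 * (m * oc)"
          using c1 sh cpos[of x "h x"] by linarith
        then have "t * (cost x (g x) + (\<Sum>(x, y)\<in>S. cost x y)) \<le> t * (2 * (m * oc))" using tpos by simp
        then show False using main tm Qpos by simp
      next
        case False
        have cheap: "y1 = y2" if "cost z y1 \<le> oc" "cost z y2 \<le> oc" for z y1 y2
        proof (rule ccontr)
          assume "y1 \<noteq> y2"
          then have "phi cost z \<le> max (cost z y1) (cost z y2)" by (rule phi_le[OF Y2])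
          moreover have "pm \<le> phi cost z" using cf(4) pm_def by simp
          ultimately show False using that False by simp
        qed
        have allH: "run A h1 k = run A h2 k" if "h1 \<in> H" "h2 \<in> H" for h1 h2 k
        proof (induction k)
          case 0 then show ?case by simp
        next
          case (Suc k)
          show ?case
          proof (cases "A (run A h1 k)")
            case None then show ?thesis using Suc by simp
          next
            case (Some z)
            then have "(z, h1 z) \<in> run A h1 (Suc k)" by simp
            moreover have "(z, h2 z) \<in> run A h2 (Suc k)" using Some Suc by simp
            ultimately have "cost z (h1 z) \<le> oc" "cost z (h2 z) \<le> oc"
              using pairb[OF that(1)] pairb[OF that(2)] by blast+
            then have "h1 z = h2 z" by (rule cheap)
            then show ?thesis using Some Suc by simp
          qed
        qed
        have gh: "run A g k = run A h k" for k
        proof (induction k)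
          case 0 then show ?case by simp
        next
          case (Suc k)
          show ?case
          proof (cases "A (run A h k)")
            case None then show ?thesis using Suc by simp
          next
            case (Some z)
            have "run A (bad z) k = run A h k" by (rule allH[OF bad(1) h(1)])
            then have m1: "(z, bad z z) \<in> run A (bad z) (Suc k)" using Some by simp
            have m2: "(z, h z) \<in> run A h (Suc k)" using Some by simp
            have "cost z (bad z z) \<le> oc" by (rule pairb[OF bad(1) m1])
            moreover have "cost z (h z) \<le> oc" by (rule pairb[OF h(1) m2])
            ultimately have "bad z z = h z" by (rule cheap)
            then have gz: "g z = h z" unfolding g_def by simp
            have r1: "run A g (Suc k) = insert (z, g z) (run A h k)" using Some Suc.IH by simp
            have r2: "run A h (Suc k) = insert (z, h z) (run A h k)" using Some by simp
            show ?thesis using r1 r2 gz by simp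
          qed
        qed
        have "\<forall>(x, y)\<in>run A h (Suc n). y = h x" using run_pairs[of _ _ A h "Suc n"] by fast
        then have "h \<in> version_space H (run A g (Suc n))"
          using h(1) unfolding gh[of "Suc n"] version_space_def by auto
        then show False using n(2) by simp
      qed
    qed
  qed
qed


theorem lemma6:
  fixes H :: "('x::finite \<Rightarrow> 'y::finite) set"
    and cost :: "'x \<Rightarrow> 'y \<Rightarrow> real"
    and f :: "('x \<times> 'y) set \<Rightarrow> real"
    and Q :: real
  assumes "card (UNIV :: 'y set) \<ge> 2"
    and "\<And>x y. cost x y > 0"
    and "\<And>S. f S \<ge> 0"
    and "Q > 0"
    and "submodular f"
    and "f {} = 0"
    and "consistency_aware H f Q"
  shows "\<exists>x. ereal (u_score H f Q cost x {})
            \<ge> ereal Q / (2 * ereal (min (g_cost cost) (R_cost cost)) * OPT H f Q cost)"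
proof -
  note Y2 = assms(1) and cpos = assms(2) and fnn = assms(3) and Qpos = assms(4)
    and sub = assms(5) and f0 = assms(6) and ca = assms(7)
  define m where "m = min (g_cost cost) (R_cost cost)"
  have m1: "m \<ge> 1" unfolding m_def using cost_facts[where cost=cost, OF Y2 cpos] by simp
  have Hne: "H \<noteq> {}"
  proof
    assume "H = {}"
    then have "version_space H {} = {}" unfolding version_space_def by simp
    then have "f {} \<ge> Q" using ca unfolding consistency_aware_def by blast
    then show False using f0 Qpos by simp
  qed
  define F where "F = {A. feasible H f Q A}"
  show ?thesis
  proof (cases "F = {}")
    case True
    then have e: "{A. feasible H f Q A} = {}" unfolding F_def by simp
    have opt: "OPT H f Q cost = \<infinity>" unfolding OPT_def e by (simp add: top_ereal_def)
    have u0: "u_score H f Q cost x {} \<ge> 0" for x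
      unfolding u_empty[where f=f and Q=Q, OF f0 Qpos]
      using Hne fnn Qpos cpos by (auto intro!: divide_nonneg_pos)
    have i: "2 * ereal m * \<infinity> = \<infinity>" using m1 by simp
    have z: "ereal Q / (2 * ereal m * OPT H f Q cost) = 0" unfolding opt i by simp
    show ?thesis
    proof (rule exI[of _ undefined])
      show "ereal Q / (2 * ereal (min (g_cost cost) (R_cost cost)) * OPT H f Q cost) \<le> ereal (u_score H f Q cost undefined {})"
        unfolding m_def[symmetric] z zero_ereal_def using u0 by (simp only: ereal_less_eq(3))
    qed
  next
    case False
    define V where "V = (\<lambda>A. ereal (alg_cost H cost A)) ` F"
    have "alg_cost H cost A \<in> range (\<lambda>S. \<Sum>(x, y)\<in>S. cost x y)" for A
    proof -
      have "alg_cost H cost A \<in> (\<lambda>h. \<Sum>(x, y)\<in>collected A h. cost x y) ` H"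
        unfolding alg_cost_def by (rule Max_in) (use Hne in auto)
      then show ?thesis by auto
    qed
    then have "V \<subseteq> ereal ` range (\<lambda>S::('x \<times> 'y) set. \<Sum>(x, y)\<in>S. cost x y)"
      unfolding V_def by auto
    then have finV: "finite V" by (rule finite_subset) simp
    have "V \<noteq> {}" using False V_def by simp
    then have "Inf V \<in> V" using finV by (simp add: cInf_eq_Min)
    moreover have "OPT H f Q cost = Inf V" unfolding OPT_def V_def F_def by simp
    ultimately obtain A where A: "feasible H f Q A" "OPT H f Q cost = ereal (alg_cost H cost A)"
      unfolding V_def F_def by auto
    obtain h where h: "h \<in> H" using Hne by blast
    have fc: "f (collected A h) \<ge> Q" using A(1) h unfolding feasible_def by blast
    then have "collected A h \<noteq> {}" using f0 Qpos by auto
    then have "(\<Sum>(x, y)\<in>collected A h. cost x y) > 0"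
      by (intro sum_pos) (auto intro: cpos)
    moreover have "(\<Sum>(x, y)\<in>collected A h. cost x y) \<le> alg_cost H cost A"
      unfolding alg_cost_def by (rule Max_ge) (use h in auto)
    ultimately have ocp: "alg_cost H cost A > 0" by linarith
    obtain x where x: "u_score H f Q cost x {} \<ge> Q / (2 * m * alg_cost H cost A)"
      using core[OF Y2 cpos fnn Qpos sub f0 ca A(1) Hne ocp] unfolding m_def by blast
    have d: "2 * m * alg_cost H cost A \<noteq> 0" using m1 ocp by simp
    have eq: "ereal Q / (2 * ereal m * OPT H f Q cost) = ereal (Q / (2 * m * alg_cost H cost A))"
    proof -
      have "2 * ereal m * ereal (alg_cost H cost A) = ereal (2 * m * alg_cost H cost A)" by simp
      then show ?thesis unfolding A(2) using d by (simp only: ereal_divide if_False)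
    qed
    show ?thesis
    proof (rule exI[of _ x])
      show "ereal Q / (2 * ereal (min (g_cost cost) (R_cost cost)) * OPT H f Q cost) \<le> ereal (u_score H f Q cost x {})"
        unfolding m_def[symmetric] eq using x by (simp only: ereal_less_eq(3))
    qed
  qed
qed

end
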